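(* Let $(\alpha_n)_{n\ge1}$ and $(\beta_n)_{n\ge1}$ be increasing sequences of real numbers with $\alpha_n\le\beta_n\le\alpha_{n+1}$ for all $n$, $\alpha_1>1$, and $\sum_n\alpha_n^{-\lambda}<\infty$ for every $\lambda>1$. Then: (1) The Euler products $E_1(s)=\prod_n(1-\alpha_n^{-s})^{-1}$ and $E_2(s)=\prod_n(1-\beta_n^{-s})^{-1}$ are well defined and analytic on $\{\operatorname{Re}(s)>1\}$. (2) There exists a function $f$, analytic and nowhere vanishing on $\{\operatorname{Re}(s)>0\}$, such that $E_1(s)=E_2(s)f(s)$ for $\operatorname{Re}(s)>1$. *)

theory Defs
  imports "HOL-Analysis.Analysis"
begin

text \<open>Euler product  prod_n (1 - a_n^(-s))^(-1), sequence indexed from 0.\<close>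
definition euler_factor :: "(nat \<Rightarrow> real) \<Rightarrow> complex \<Rightarrow> nat \<Rightarrow> complex" where
  "euler_factor a s n = inverse (1 - (complex_of_real (a n)) powr (- s))"

definition euler_product :: "(nat \<Rightarrow> real) \<Rightarrow> complex \<Rightarrow> complex" where
  "euler_product a s = (\<Prod>n. euler_factor a s n)"

end

theory Submission
  imports Defs "HOL-Complex_Analysis.Complex_Analysis"
begin

lemma cpowr_eq: "a > 0 \<Longrightarrow> (complex_of_real a) powr (- s) = exp (- s * of_real (ln a))"
  by (simp add: powr_def Ln_of_real)


lemma cpowr_norm: "a > 0 \<Longrightarrow> norm ((complex_of_real a) powr (- s)) = a powr (- Re s)"
  by (simp add: norm_powr_real_powr)

lemma w_bounds:
  fixes a a0 s0 :: real and s :: complex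
  assumes "1 < a0" "a0 \<le> a" "0 < s0" "s0 \<le> Re s"
  shows "norm (complex_of_real a powr (- s)) \<le> a powr (- s0)"
    and "a powr (- s0) \<le> a0 powr (- s0)" and "a0 powr (- s0) < 1"
    and "norm (1 - complex_of_real a powr (- s)) \<ge> 1 - a0 powr (- s0)"
    and "1 - complex_of_real a powr (- s) \<noteq> 0"
proof -
  show 1: "norm (complex_of_real a powr (- s)) \<le> a powr (- s0)"
    using assms by (simp add: cpowr_norm powr_mono)
  show 2: "a powr (- s0) \<le> a0 powr (- s0)"
    using assms by (intro powr_mono2') auto
  show 3: "a0 powr (- s0) < 1"
    using powr_less_mono[of "-s0" 0 a0] assms by simp
  have "norm (1 - complex_of_real a powr (- s)) \<ge> 1 - norm (complex_of_real a powr (- s))"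
    by (metis norm_minus_commute norm_one norm_triangle_ineq2)
  thus 4: "norm (1 - complex_of_real a powr (- s)) \<ge> 1 - a0 powr (- s0)" using 1 2 by linarith
  thus "1 - complex_of_real a powr (- s) \<noteq> 0" using 3 by auto
qed

lemma euler_bound:
  fixes a a0 s0 :: real and s :: complex
  assumes "1 < a0" "a0 \<le> a" "0 < s0" "s0 \<le> Re s"
  shows "norm (inverse (1 - complex_of_real a powr (- s)) - 1) \<le> a powr (- s0) / (1 - a0 powr (- s0))"
proof -
  let ?w = "complex_of_real a powr (- s)"
  note wb = w_bounds[OF assms]
  have "inverse (1 - ?w) - 1 = ?w / (1 - ?w)"
    using wb(5) by (simp add: field_simps)
  hence "norm (inverse (1 - ?w) - 1) = norm ?w / norm (1 - ?w)" by (simp add: norm_divide)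
  also have "\<dots> \<le> a powr (- s0) / (1 - a0 powr (- s0))"
    using wb by (intro frac_le) auto
  finally show ?thesis .
qed

lemma ratio_bound:
  fixes a a0 b s0 R C :: real and s :: complex
  assumes "1 < a0" "a0 \<le> a" "0 < s0" "s0 \<le> Re s"
    and "norm (complex_of_real b powr (- s) - complex_of_real a powr (- s)) \<le> C"
  shows "norm ((1 - complex_of_real b powr (- s)) / (1 - complex_of_real a powr (- s)) - 1)
     \<le> C / (1 - a0 powr (- s0))"
proof -
  let ?w = "complex_of_real a powr (- s)"
  let ?v = "complex_of_real b powr (- s)"
  note wb = w_bounds[OF assms(1-4)]
  have "(1 - ?v) / (1 - ?w) - 1 = (?w - ?v) / (1 - ?w)"
    using wb(5) by (simp add: field_simps)
  hence "norm ((1 - ?v) / (1 - ?w) - 1) = norm (?w - ?v) / norm (1 - ?w)" by (simp add: norm_divide)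
  also have "\<dots> = norm (?v - ?w) / norm (1 - ?w)" by (simp add: norm_minus_commute)
  also have "\<dots> \<le> C / (1 - a0 powr (- s0))"
    using wb assms(5) by (intro frac_le) (auto intro: order_trans[OF norm_ge_zero])
  finally show ?thesis .
qed
lemma diff_bound:
  fixes a b s0 :: real and s :: complex
  assumes "1 \<le> a" "a \<le> b" "0 < s0" "s0 \<le> Re s"
  shows "norm (complex_of_real b powr (- s) - complex_of_real a powr (- s))
         \<le> norm s / s0 * (a powr (- s0) - b powr (- s0))"
proof (cases "a = b")
  case True thus ?thesis by simp
next
  case False
  hence ab: "ln a < ln b" using assms by simp
  define f where "f = (\<lambda>t::real. exp (- s * complex_of_real t))"
  define \<phi> where "\<phi> = (\<lambda>t::real. - (norm s / s0) * exp (- s0 * t))"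
  have "norm (f (ln b) - f (ln a)) \<le> \<phi> (ln b) - \<phi> (ln a)"
  proof (rule differentiable_bound_general[OF ab])
    show "continuous_on {ln a..ln b} f" unfolding f_def by (intro continuous_intros)
    show "continuous_on {ln a..ln b} \<phi>" unfolding \<phi>_def by (intro continuous_intros)
    fix t assume t: "ln a < t" "t < ln b"
    have "((\<lambda>z. exp (- s * z)) has_field_derivative (exp (- s * complex_of_real t) * (- s))) (at (of_real t))"
      by (auto intro!: derivative_eq_intros)
    thus "(f has_vector_derivative (exp (- s * complex_of_real t) * (- s))) (at t)"
      unfolding f_def by (rule has_vector_derivative_real_field)
    show "(\<phi> has_vector_derivative (norm s * exp (- s0 * t))) (at t)"
      unfolding \<phi>_def has_real_derivative_iff_has_vector_derivative[symmetric]
      using \<open>0 < s0\<close> by (auto intro!: derivative_eq_intros)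
    have t0: "t \<ge> 0" using t assms by (smt (verit) ln_ge_zero)
    have "norm (exp (- s * complex_of_real t) * (- s)) = exp (- Re s * t) * norm s"
      by (simp add: norm_mult)
    also have "\<dots> \<le> exp (- s0 * t) * norm s"
      using t0 assms by (intro mult_right_mono) (auto intro: mult_right_mono)
    finally show "norm (exp (- s * complex_of_real t) * (- s)) \<le> norm s * exp (- s0 * t)"
      by (simp add: mult.commute)
  qed
  moreover have "f (ln b) = complex_of_real b powr (- s)" "f (ln a) = complex_of_real a powr (- s)"
    using assms by (simp_all add: f_def cpowr_eq)
  moreover have "\<phi> (ln b) - \<phi> (ln a) = norm s / s0 * (a powr (- s0) - b powr (- s0))"
    using assms by (simp add: \<phi>_def powr_def exp_minus algebra_simps)
  ultimately show ?thesis by simp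
qed

lemma prodinf_holo:
  fixes F :: "nat \<Rightarrow> complex \<Rightarrow> complex"
  assumes S: "open S" and hol: "\<And>n. F n holomorphic_on S"
    and loc: "\<And>x. x \<in> S \<Longrightarrow> \<exists>d>0. cball x d \<subseteq> S \<and> (\<exists>M. summable M \<and> (\<forall>n. \<forall>z\<in>cball x d. norm (F n z - 1) \<le> M n))"
  shows "(\<lambda>z. \<Prod>n. F n z) holomorphic_on S"
proof (rule holomorphic_uniform_sequence[OF S, where f="\<lambda>N z. \<Prod>n<N. F n z"])
  show "(\<lambda>z. \<Prod>n<N. F n z) holomorphic_on S" for N
    using hol by (intro holomorphic_intros) auto
next
  fix x assume "x \<in> S"
  then obtain d M where d: "d > 0" "cball x d \<subseteq> S" and M: "summable M"
    "\<And>n z. z \<in> cball x d \<Longrightarrow> norm (F n z - 1) \<le> M n"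
    using loc[OF \<open>x \<in> S\<close>] by meson
  have cp: "convergent_prod (\<lambda>n. F n z)" if "z \<in> cball x d" for z
    apply (rule abs_convergent_prod_imp_convergent_prod)
    apply (rule summable_imp_abs_convergent_prod)
    apply (rule summable_comparison_test'[OF M(1)])
    using M(2)[OF that] by auto
  have uc: "uniformly_convergent_on (cball x d) (\<lambda>N z. \<Prod>n<N. F n z)"
  proof (rule uniformly_convergent_on_prod')
    show "continuous_on (cball x d) (F n)" for n
      using hol d(2) holomorphic_on_imp_continuous_on holomorphic_on_subset by blast
    show "uniformly_convergent_on (cball x d) (\<lambda>N z. \<Sum>n<N. norm (F n z - 1))"
      by (rule Weierstrass_m_test'[OF _ M(1)]) (use M(2) in auto)
  qed auto
  hence ul: "uniform_limit (cball x d) (\<lambda>N z. \<Prod>n<N. F n z) (\<lambda>z. lim (\<lambda>N. \<Prod>n<N. F n z)) sequentially"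
    using uniformly_convergent_uniform_limit_iff by blast
  have eq: "lim (\<lambda>N. \<Prod>n<N. F n z) = (\<Prod>n. F n z)" if "z \<in> cball x d" for z
    by (rule limI[OF has_prod_imp_tendsto'[OF convergent_prod_has_prod[OF cp[OF that]]]])
  have "uniform_limit (cball x d) (\<lambda>N z. \<Prod>n<N. F n z) (\<lambda>z. \<Prod>n. F n z) sequentially
     \<longleftrightarrow> uniform_limit (cball x d) (\<lambda>N z. \<Prod>n<N. F n z) (\<lambda>z. lim (\<lambda>N. \<Prod>n<N. F n z)) sequentially"
    by (rule uniform_limit_cong') (use eq in auto)
  with ul have "uniform_limit (cball x d) (\<lambda>N z. \<Prod>n<N. F n z) (\<lambda>z. \<Prod>n. F n z) sequentially"
    by blast
  thus "\<exists>d>0. cball x d \<subseteq> S \<and> uniform_limit (cball x d) (\<lambda>N z. \<Prod>n<N. F n z) (\<lambda>z. \<Prod>n. F n z) sequentially"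
    using d by blast
qed


lemma conv_from_bound:
  fixes F :: "nat \<Rightarrow> complex"
  shows "summable M \<Longrightarrow> (\<And>n. norm (F n - 1) \<le> M n) \<Longrightarrow> convergent_prod F"
  apply (rule abs_convergent_prod_imp_convergent_prod)
  apply (rule summable_imp_abs_convergent_prod)
  apply (erule summable_comparison_test')
  by auto

lemma cball_Re: "z \<in> cball x d \<Longrightarrow> Re x - d \<le> Re z"
  using abs_Re_le_cmod[of "x - z"] by (auto simp: dist_norm)

lemma cball_norm: "z \<in> cball x d \<Longrightarrow> norm z \<le> norm x + d"
  using norm_triangle_ineq2[of z x] by (auto simp: dist_norm norm_minus_commute)

lemma euler_holo:
  fixes \<gamma> :: "nat \<Rightarrow> real"
  assumes a0: "1 < a0" "\<And>n. a0 \<le> \<gamma> n"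
    and sm: "\<And>l::real. l > 1 \<Longrightarrow> summable (\<lambda>n. \<gamma> n powr (- l))"
  shows "(\<forall>s. Re s > 1 \<longrightarrow> convergent_prod (euler_factor \<gamma> s))
       \<and> euler_product \<gamma> analytic_on {s. Re s > 1}"
proof -
  have bnd: "norm (euler_factor \<gamma> s n - 1) \<le> \<gamma> n powr (- s0) / (1 - a0 powr (- s0))"
    if "1 < s0" "s0 \<le> Re s" for s s0 n
    unfolding euler_factor_def using that a0 by (intro euler_bound) auto
  have smM: "summable (\<lambda>n. \<gamma> n powr (- s0) / (1 - a0 powr (- s0)))" if "1 < s0" for s0
    using sm[OF that] by (rule summable_divide)
  have "convergent_prod (euler_factor \<gamma> s)" if "Re s > 1" for s
    by (rule conv_from_bound[OF smM[OF that] bnd[OF that order.refl]])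
  moreover have "(\<lambda>s. \<Prod>n. euler_factor \<gamma> s n) holomorphic_on {s. Re s > 1}"
  proof (rule prodinf_holo)
    show "open {s. 1 < Re s}" by (simp add: open_halfspace_Re_gt)
    have nz: "1 - complex_of_real (\<gamma> n) powr (- s) \<noteq> 0" if "s \<in> {s. 1 < Re s}" for s n
      using that a0 by (intro w_bounds(5)[of a0 _ "Re s"]) auto
    show "(\<lambda>s. euler_factor \<gamma> s n) holomorphic_on {s. 1 < Re s}" for n
      unfolding euler_factor_def using nz by (intro holomorphic_intros) auto
    fix x assume x: "x \<in> {s. 1 < Re s}"
    define d where "d = (Re x - 1) / 2"
    have d: "d > 0" "1 < Re x - d" using x by (auto simp: d_def field_simps)
    have "cball x d \<subseteq> {s. 1 < Re s}" using cball_Re d by force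
    moreover have "\<forall>n. \<forall>z\<in>cball x d. norm (euler_factor \<gamma> z n - 1) \<le> \<gamma> n powr (- (Re x - d)) / (1 - a0 powr (- (Re x - d)))"
      using bnd d cball_Re by blast
    ultimately show "\<exists>d>0. cball x d \<subseteq> {s. 1 < Re s} \<and> (\<exists>M. summable M \<and> (\<forall>n. \<forall>z\<in>cball x d. norm (euler_factor \<gamma> z n - 1) \<le> M n))"
      using d smM[OF d(2)] by blast
  qed
  moreover have "euler_product \<gamma> = (\<lambda>s. \<Prod>n. euler_factor \<gamma> s n)"
    by (rule ext) (simp add: euler_product_def)
  ultimately show ?thesis
    by (simp add: analytic_on_open open_halfspace_Re_gt)
qed

lemma ratio_holo:
  fixes \<alpha> \<beta> :: "nat \<Rightarrow> real"
  assumes a0: "1 < a0" "\<And>n. a0 \<le> \<alpha> n" and ab: "\<And>n. \<alpha> n \<le> \<beta> n"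
    and sm: "\<And>l::real. l > 0 \<Longrightarrow> summable (\<lambda>n. \<alpha> n powr (- l) - \<beta> n powr (- l))"
  defines "F \<equiv> (\<lambda>s n. (1 - complex_of_real (\<beta> n) powr (- s)) / (1 - complex_of_real (\<alpha> n) powr (- s)))"
  shows "(\<forall>s. Re s > 0 \<longrightarrow> convergent_prod (F s))
       \<and> (\<lambda>s. \<Prod>n. F s n) holomorphic_on {s. Re s > 0}"
proof -
  have nn: "0 \<le> \<alpha> n powr (- l) - \<beta> n powr (- l)" if "l > 0" for n l
    using a0(1) a0(2)[of n] ab[of n] that by (simp add: powr_mono2')
  have bnd: "norm (F s n - 1) \<le> (R / s0 * (\<alpha> n powr (- s0) - \<beta> n powr (- s0))) / (1 - a0 powr (- s0))"
    if "0 < s0" "s0 \<le> Re s" "norm s \<le> R" for s s0 n R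
    unfolding F_def
  proof (rule ratio_bound)
    show "1 < a0" "a0 \<le> \<alpha> n" "0 < s0" "s0 \<le> Re s" using that a0 by auto
    have "norm (complex_of_real (\<beta> n) powr - s - complex_of_real (\<alpha> n) powr - s)
          \<le> norm s / s0 * (\<alpha> n powr (- s0) - \<beta> n powr (- s0))"
      using that a0(1) a0(2)[of n] ab[of n] by (intro diff_bound) auto
    also have "\<dots> \<le> R / s0 * (\<alpha> n powr (- s0) - \<beta> n powr (- s0))"
      using that nn[OF that(1), of n] by (intro mult_right_mono divide_right_mono) auto
    finally show "norm (complex_of_real (\<beta> n) powr - s - complex_of_real (\<alpha> n) powr - s)
          \<le> R / s0 * (\<alpha> n powr (- s0) - \<beta> n powr (- s0))" .
  qed
  have smM: "summable (\<lambda>n. (R / s0 * (\<alpha> n powr (- s0) - \<beta> n powr (- s0))) / (1 - a0 powr (- s0)))" if "0 < s0" for s0 R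
    using sm[OF that] by (intro summable_divide summable_mult)
  have "convergent_prod (F s)" if "Re s > 0" for s
    by (rule conv_from_bound[OF smM[OF that] bnd[OF that order.refl order.refl]])
  moreover have "(\<lambda>s. \<Prod>n. F s n) holomorphic_on {s. Re s > 0}"
  proof (rule prodinf_holo)
    show "open {s. 0 < Re s}" by (simp add: open_halfspace_Re_gt)
    have nz: "1 - complex_of_real (\<alpha> n) powr (- s) \<noteq> 0" if "s \<in> {s. 0 < Re s}" for s n
      using that a0 by (intro w_bounds(5)[of a0 _ "Re s"]) auto
    show "(\<lambda>s. F s n) holomorphic_on {s. 0 < Re s}" for n
      unfolding F_def using nz by (intro holomorphic_intros) auto
    fix x assume x: "x \<in> {s. 0 < Re s}"
    define d where "d = Re x / 2"
    have d: "d > 0" "0 < Re x - d" using x by (auto simp: d_def field_simps)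
    have "cball x d \<subseteq> {s. 0 < Re s}" using cball_Re d by force
    moreover have "\<forall>n. \<forall>z\<in>cball x d. norm (F z n - 1) \<le> ((norm x + d) / (Re x - d) * (\<alpha> n powr (- (Re x - d)) - \<beta> n powr (- (Re x - d)))) / (1 - a0 powr (- (Re x - d)))"
      using bnd d cball_Re cball_norm by blast
    ultimately show "\<exists>d>0. cball x d \<subseteq> {s. 0 < Re s} \<and> (\<exists>M. summable M \<and> (\<forall>n. \<forall>z\<in>cball x d. norm (F z n - 1) \<le> M n))"
      using d smM[OF d(2)] by blast
  qed
  ultimately show ?thesis by blast
qed

theorem mainTheorem3:
  fixes \<alpha> \<beta> :: "nat \<Rightarrow> real"
  assumes "mono \<alpha>" and "mono \<beta>"
    and "\<And>n. \<alpha> n \<le> \<beta> n" and "\<And>n. \<beta> n \<le> \<alpha> (Suc n)"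
    and "\<alpha> 0 > 1"
    and "\<And>l::real. l > 1 \<Longrightarrow> summable (\<lambda>n. \<alpha> n powr (- l))"
  shows "(\<forall>s. Re s > 1 \<longrightarrow> convergent_prod (euler_factor \<alpha> s) \<and> convergent_prod (euler_factor \<beta> s))
       \<and> euler_product \<alpha> analytic_on {s. Re s > 1}
       \<and> euler_product \<beta> analytic_on {s. Re s > 1}
       \<and> (\<exists>f. f analytic_on {s. Re s > 0} \<and> (\<forall>s. Re s > 0 \<longrightarrow> f s \<noteq> 0)
              \<and> (\<forall>s. Re s > 1 \<longrightarrow> euler_product \<alpha> s = euler_product \<beta> s * f s))"
proof -
  note mono\<alpha> = assms(1) and ab = assms(3) and ba = assms(4) and a1 = assms(5) and sm = assms(6)
  define a0 where "a0 = \<alpha> 0"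
  have a0: "1 < a0" using a1 by (simp add: a0_def)
  have aa0: "a0 \<le> \<alpha> n" for n unfolding a0_def using mono\<alpha> by (simp add: monoD)
  have ba0: "a0 \<le> \<beta> n" for n using aa0[of n] ab[of n] by linarith
  have E1: "(\<forall>s. Re s > 1 \<longrightarrow> convergent_prod (euler_factor \<alpha> s)) \<and> euler_product \<alpha> analytic_on {s. Re s > 1}"
    by (rule euler_holo[OF a0 aa0 sm])
  have smb: "summable (\<lambda>n. \<beta> n powr (- l))" if "l > 1" for l :: real
  proof (rule summable_comparison_test'[OF sm[OF that]])
    fix n
    show "norm (\<beta> n powr (- l)) \<le> \<alpha> n powr (- l)"
      using a0 aa0[of n] ab[of n] that by (simp add: powr_mono2')
  qed
  have E2: "(\<forall>s. Re s > 1 \<longrightarrow> convergent_prod (euler_factor \<beta> s)) \<and> euler_product \<beta> analytic_on {s. Re s > 1}"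
    by (rule euler_holo[OF a0 ba0 smb])
  have smd: "summable (\<lambda>n. \<alpha> n powr (- l) - \<beta> n powr (- l))" if "l > 0" for l :: real
  proof -
    have dec: "decseq (\<lambda>n. \<alpha> n powr (- l))"
      unfolding decseq_def using that a0 aa0 mono\<alpha>
      by (auto intro!: powr_mono2' simp: monoD) (smt (verit) monoD)
    obtain L where L: "(\<lambda>n. \<alpha> n powr (- l)) \<longlonglongrightarrow> L"
      using decseq_convergent[OF dec, of 0] by auto
    have ts: "summable (\<lambda>n. \<alpha> n powr (- l) - \<alpha> (Suc n) powr (- l))"
      by (rule telescope_summable'[OF L])
    show ?thesis
    proof (rule summable_comparison_test'[OF ts])
      fix n
      have "\<beta> n powr (- l) \<le> \<alpha> n powr (- l)" "\<alpha> (Suc n) powr (- l) \<le> \<beta> n powr (- l)"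
        using a0 aa0[of n] ab[of n] ba[of n] that by (auto intro!: powr_mono2')
      thus "norm (\<alpha> n powr (- l) - \<beta> n powr (- l)) \<le> \<alpha> n powr (- l) - \<alpha> (Suc n) powr (- l)"
        by simp
    qed
  qed
  define F where "F \<equiv> (\<lambda>s n. (1 - complex_of_real (\<beta> n) powr (- s)) / (1 - complex_of_real (\<alpha> n) powr (- s)))"
  have R: "(\<forall>s. Re s > 0 \<longrightarrow> convergent_prod (F s)) \<and> (\<lambda>s. \<Prod>n. F s n) holomorphic_on {s. Re s > 0}"
    unfolding F_def by (rule ratio_holo[OF a0 aa0 ab smd])
  define f where "f = (\<lambda>s. \<Prod>n. F s n)"
  have nzA: "1 - complex_of_real (\<alpha> n) powr (- s) \<noteq> 0" if "Re s > 0" for s n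
    using that a0 aa0 by (intro w_bounds(5)[of a0 _ "Re s"]) auto
  have nzB: "1 - complex_of_real (\<beta> n) powr (- s) \<noteq> 0" if "Re s > 0" for s n
    using that a0 ba0 by (intro w_bounds(5)[of a0 _ "Re s"]) auto
  have "f analytic_on {s. Re s > 0}"
    using R by (simp add: f_def analytic_on_open open_halfspace_Re_gt)
  moreover have "f s \<noteq> 0" if "Re s > 0" for s
    unfolding f_def using R that nzA nzB by (intro prodinf_nonzero) (auto simp: F_def)
  moreover have "euler_product \<alpha> s = euler_product \<beta> s * f s" if "Re s > 1" for s
  proof -
    have s0: "Re s > 0" using that by simp
    have "euler_product \<beta> s * f s = (\<Prod>n. euler_factor \<beta> s n * F s n)"
      unfolding euler_product_def f_def
      using E2 R that s0 by (intro prodinf_mult) auto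
    also have "\<dots> = (\<Prod>n. euler_factor \<alpha> s n)"
      using nzA[OF s0] nzB[OF s0] by (simp add: F_def euler_factor_def field_simps)
    finally show ?thesis by (simp add: euler_product_def)
  qed
  ultimately show ?thesis using E1 E2 by blast
qed

end
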